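(* Let $n\ge 2$ and let $Q\in\mathbb{R}^{n\times n}$ be an irreducible generator matrix of a continuous-time Markov chain ($q_{ij}\ge0$ for $i\ne j$, $q_{ii}=-\sum_{j\ne i}q_{ij}$). Let $\boldsymbol v$ be the positive eigenvector of $Q^\top$ for eigenvalue $0$ with $\boldsymbol 1_n^\top\boldsymbol v=1$, and let $L^*$ be the matrix with entries $L^*_{ii}=\sum_{j\ne i}q_{ji}\frac{v_j}{v_i}$ and $L^*_{ij}=-q_{ji}\frac{v_j}{v_i}$ for $i\ne j$. Let $B=\operatorname{diag}(\beta_i)$ with all $\beta_i>0$ and $D=\operatorname{diag}(\delta_i)$ with all $\delta_i\ge 0$ and at least one $\delta_i>0$. Let $A=(L^*+D)^{-1}B$ and define, for $\boldsymbol p\in\mathbb{R}^n$ with $\boldsymbol p\ge\boldsymbol 0$, \[ H(\boldsymbol p)=(I+A\operatorname{diag}(\boldsymbol p))^{-1}A\boldsymbol p . \] If $H$ has a fixed point $\boldsymbol p^*\gg\boldsymbol 0$, then it is the unique fixed point of $H$ with all entries strictly positive.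
   Context: For vectors, $\boldsymbol x\gg\boldsymbol y$ means $x_i>y_i$ for all $i$, and $\boldsymbol x\ge\boldsymbol y$ means $x_i\ge y_i$ for all $i$. *)

theory Defs
  imports "HOL-Analysis.Analysis"
begin

definition diagm :: "real ^ 'n \<Rightarrow> real ^ 'n ^ 'n" where
  "diagm x = (\<chi> i j. if i = j then x $ i else 0)"

definition generator_matrix :: "real ^ 'n ^ 'n \<Rightarrow> bool" where
  "generator_matrix Q \<longleftrightarrow>
     (\<forall>i j. i \<noteq> j \<longrightarrow> Q $ i $ j \<ge> 0) \<and>
     (\<forall>i. Q $ i $ i = - (\<Sum>j\<in>UNIV - {i}. Q $ i $ j))"

definition irreducible_matrix :: "real ^ 'n ^ 'n \<Rightarrow> bool" where
  "irreducible_matrix Q \<longleftrightarrow>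
     (\<forall>i j. (i, j) \<in> {(a, b). a \<noteq> b \<and> Q $ a $ b \<noteq> 0}\<^sup>*)"

definition Lstar :: "real ^ 'n ^ 'n \<Rightarrow> real ^ 'n \<Rightarrow> real ^ 'n ^ 'n" where
  "Lstar Q v = (\<chi> i j. if i = j then (\<Sum>k\<in>UNIV - {i}. Q $ k $ i * v $ k / v $ i)
                        else - (Q $ j $ i * v $ j / v $ i))"

definition Amat :: "real ^ 'n ^ 'n \<Rightarrow> real ^ 'n \<Rightarrow> real ^ 'n \<Rightarrow> real ^ 'n \<Rightarrow> real ^ 'n ^ 'n" where
  "Amat Q v \<beta> \<delta> = matrix_inv (Lstar Q v + diagm \<delta>) ** diagm \<beta>"

definition Hmap :: "real ^ 'n ^ 'n \<Rightarrow> real ^ 'n \<Rightarrow> real ^ 'n" where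
  "Hmap A p = matrix_inv (mat 1 + A ** diagm p) *v (A *v p)"

end

theory Submission
  imports Defs
begin

lemma minv:
  fixes A :: "real ^ 'n ^ 'n"
  assumes "invertible A"
  shows "A ** matrix_inv A = mat 1 \<and> matrix_inv A ** A = mat 1"
  using assms unfolding invertible_def matrix_inv_def by (rule someI_ex)

lemma mv_comp: "((A::real^'n^'n) *v x) $ i = (\<Sum>j\<in>UNIV. A $ i $ j * x $ j)"
  by (simp add: matrix_vector_mult_def)

lemma zmat_invertible:
  fixes N :: "real ^ 'n ^ 'n"
  assumes off: "\<forall>i j. i \<noteq> j \<longrightarrow> N $ i $ j \<le> 0"
    and rs: "\<forall>i. (\<Sum>j\<in>UNIV. N $ i $ j) \<ge> 0"
    and rs1: "\<exists>i. (\<Sum>j\<in>UNIV. N $ i $ j) > 0"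
    and irr: "\<forall>i j. (i, j) \<in> {(a, b). a \<noteq> b \<and> N $ a $ b \<noteq> 0}\<^sup>*"
  shows "invertible N"
proof -
  have ker: "x = 0" if Nx: "N *v x = 0" and pos: "\<exists>i. x $ i > 0" for x
  proof -
    define m where "m = Max (range (\<lambda>i. x $ i))"
    have mge: "x $ i \<le> m" for i unfolding m_def by (rule Max_ge) auto
    have "m \<in> range (\<lambda>i. x $ i)" unfolding m_def by (rule Max_in) auto
    then obtain i0 where i0: "x $ i0 = m" by auto
    have mpos: "m > 0" using pos mge by (meson less_le_trans)
    have key: "(\<Sum>j\<in>UNIV. N $ i $ j) = 0 \<and> (\<forall>j. j \<noteq> i \<and> N $ i $ j \<noteq> 0 \<longrightarrow> x $ j = m)"
      if xi: "x $ i = m" for i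
    proof -
      have "0 = (\<Sum>j\<in>UNIV. N $ i $ j * x $ j)" using Nx mv_comp[of N x i] by simp
      also have "\<dots> = m * (\<Sum>j\<in>UNIV. N $ i $ j) - (\<Sum>j\<in>UNIV. N $ i $ j * (m - x $ j))"
        by (simp add: sum_distrib_left sum_subtractf algebra_simps)
      finally have eq: "m * (\<Sum>j\<in>UNIV. N $ i $ j) = (\<Sum>j\<in>UNIV. N $ i $ j * (m - x $ j))" by simp
      have tnp: "N $ i $ j * (m - x $ j) \<le> 0" for j
      proof (cases "j = i")
        case True then show ?thesis using xi by simp
      next
        case False then show ?thesis using off mge[of j]
          by (simp add: mult_nonpos_nonneg)
      qed
      have "(\<Sum>j\<in>UNIV. N $ i $ j * (m - x $ j)) \<le> 0" using tnp by (simp add: sum_nonpos)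
      moreover have "m * (\<Sum>j\<in>UNIV. N $ i $ j) \<ge> 0" using mpos rs by simp
      ultimately have s0: "(\<Sum>j\<in>UNIV. N $ i $ j * (m - x $ j)) = 0"
        and r0: "m * (\<Sum>j\<in>UNIV. N $ i $ j) = 0" using eq by linarith+
      have all0: "\<forall>j\<in>UNIV. N $ i $ j * (m - x $ j) = 0"
      proof -
        have "(\<Sum>j\<in>UNIV. - (N $ i $ j * (m - x $ j))) = 0" using s0 by (simp add: sum_negf)
        then have "\<forall>j\<in>UNIV. - (N $ i $ j * (m - x $ j)) = 0"
          using sum_nonneg_eq_0_iff[of UNIV "\<lambda>j. - (N $ i $ j * (m - x $ j))"] tnp by simp
        then show ?thesis by simp
      qed
      show ?thesis using r0 mpos all0 by auto
    qed
    have S: "x $ j = m" if "(i0, j) \<in> {(a, b). a \<noteq> b \<and> N $ a $ b \<noteq> 0}\<^sup>*" for j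
      using that
    proof (induction rule: rtrancl_induct)
      case base then show ?case using i0 .
    next
      case (step y z) then show ?case using key[of y] by auto
    qed
    have "(\<Sum>j\<in>UNIV. N $ i $ j) = 0" for i using key S irr by blast
    then show ?thesis using rs1 by simp
  qed
  have "x = 0" if "N *v x = 0" for x
  proof (rule ccontr)
    assume "x \<noteq> 0"
    then obtain i where "x $ i \<noteq> 0" by (metis vec_eq_iff zero_index)
    show False
    proof (cases "x $ i > 0")
      case True then show ?thesis using ker[of x] that \<open>x \<noteq> 0\<close> by blast
    next
      case False
      then have "(-x) $ i > 0" using \<open>x $ i \<noteq> 0\<close> by simp
      moreover have "N *v (-x) = 0" using that
        by (metis matrix_vector_mult_diff_distrib diff_0 diff_self)
      ultimately show ?thesis using ker[of "-x"] \<open>x \<noteq> 0\<close> by auto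
    qed
  qed
  then show ?thesis
    by (simp add: invertible_left_inverse matrix_left_invertible_ker)
qed

lemma diagm_mv: "diagm a *v x = a * x"
proof -
  have "(\<Sum>j\<in>UNIV. (if i = j then a $ i else 0) * x $ j) = a $ i * x $ i" for i
  proof -
    have "(\<Sum>j\<in>UNIV. (if i = j then a $ i else 0) * x $ j) = (\<Sum>j\<in>UNIV. if i = j then a $ i * x $ j else 0)"
      by (rule sum.cong) auto
    also have "\<dots> = a $ i * x $ i" by simp
    finally show ?thesis .
  qed
  then show ?thesis by (simp add: vec_eq_iff matrix_vector_mult_def diagm_def)
qed

lemma diagm_mm: "diagm a ** diagm b = diagm (a * b)"
proof -
  have "(\<Sum>k\<in>UNIV. (if i = k then a $ i else 0) * (if k = j then b $ k else 0))
      = (if i = j then a $ i * b $ i else 0)" for i j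
  proof -
    have "(\<Sum>k\<in>UNIV. (if i = k then a $ i else 0) * (if k = j then b $ k else 0))
      = (\<Sum>k\<in>UNIV. if i = k then (if i = j then a $ i * b $ i else 0) else 0)"
      by (rule sum.cong) auto
    also have "\<dots> = (if i = j then a $ i * b $ i else 0)" by simp
    finally show ?thesis .
  qed
  then show ?thesis by (simp add: vec_eq_iff matrix_matrix_mult_def diagm_def)
qed

lemma ratio_le:
  fixes M :: "real ^ 'n ^ 'n" and p q \<beta> :: "real ^ 'n"
  assumes off: "\<forall>i j. i \<noteq> j \<longrightarrow> M $ i $ j \<le> 0"
    and bp: "\<forall>i. \<beta> $ i > 0"
    and pp: "\<forall>i. p $ i > 0" and qp: "\<forall>i. q $ i > 0"
    and ep: "\<forall>i. (M *v p) $ i = \<beta> $ i * p $ i * (1 - p $ i)"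
    and eq: "\<forall>i. (M *v q) $ i = \<beta> $ i * q $ i * (1 - q $ i)"
  shows "q $ i \<le> p $ i"
proof -
  define t where "t = Max (range (\<lambda>i. q $ i / p $ i))"
  have tge: "q $ i / p $ i \<le> t" for i unfolding t_def by (rule Max_ge) auto
  have "t \<in> range (\<lambda>i. q $ i / p $ i)" unfolding t_def by (rule Max_in) auto
  then obtain k where k: "q $ k / p $ k = t" by auto
  have qle: "q $ j \<le> t * p $ j" for j using tge[of j] pp by (simp add: divide_le_eq)
  have qk: "q $ k = t * p $ k" using k pp by (metis less_irrefl nonzero_eq_divide_eq)
  have t1: "t \<le> 1"
  proof (rule ccontr)
    assume "\<not> t \<le> 1"
    hence t1: "t > 1" by simp
    have trm: "M $ k $ j * q $ j \<ge> M $ k $ j * (t * p $ j)" for j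
    proof (cases "j = k")
      case True then show ?thesis using qk by simp
    next
      case False then show ?thesis using off qle[of j] by (simp add: mult_left_mono_neg)
    qed
    have "(M *v q) $ k \<ge> t * (M *v p) $ k"
      unfolding mv_comp sum_distrib_left
      by (rule sum_mono) (use trm in \<open>simp add: algebra_simps\<close>)
    hence "\<beta> $ k * q $ k * (1 - q $ k) \<ge> \<beta> $ k * q $ k * (1 - p $ k)"
      using ep eq qk by (simp add: algebra_simps)
    hence "1 - q $ k \<ge> 1 - p $ k" using bp qp
      by (metis mult_le_cancel_left_pos mult_pos_pos)
    hence "t * p $ k \<le> 1 * p $ k" using qk by simp
    hence "t \<le> 1" using pp mult_right_le_imp_le[of t "p $ k" 1] by simp
    thus False using t1 by simp
  qed
  have "t * p $ i \<le> 1 * p $ i" using t1 pp mult_right_mono[of t 1 "p $ i"] by (simp add: less_imp_le)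
  then show ?thesis using qle[of i] by simp
qed

theorem proposition2:
  fixes Q :: "real ^ 'n ^ 'n" and v \<beta> \<delta> pstar :: "real ^ 'n"
  assumes "CARD('n) \<ge> 2"
    and "generator_matrix Q" and "irreducible_matrix Q"
    and "\<forall>i. v $ i > 0" and "transpose Q *v v = 0" and "(\<Sum>i\<in>UNIV. v $ i) = 1"
    and "\<forall>i. \<beta> $ i > 0"
    and "\<forall>i. \<delta> $ i \<ge> 0" and "\<exists>i. \<delta> $ i > 0"
    and "\<forall>i. pstar $ i > 0"
    and "Hmap (Amat Q v \<beta> \<delta>) pstar = pstar"
  shows "\<forall>p :: real ^ 'n. (\<forall>i. p $ i > 0) \<and> Hmap (Amat Q v \<beta> \<delta>) p = p \<longrightarrow> p = pstar"
proof -
  note vpos = assms(4) and bpos = assms(7) and dnn = assms(8) and dpos = assms(9)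
  define M where "M = Lstar Q v + diagm \<delta>"
  have Moff: "M $ i $ j = - (Q $ j $ i * v $ j / v $ i)" if "i \<noteq> j" for i j
    using that by (simp add: M_def Lstar_def diagm_def)
  have Lrow: "(\<Sum>j\<in>UNIV. Lstar Q v $ i $ j) = 0" for i
  proof -
    have "(\<Sum>j\<in>UNIV. Lstar Q v $ i $ j) = Lstar Q v $ i $ i + (\<Sum>j\<in>UNIV - {i}. Lstar Q v $ i $ j)"
      by (simp add: sum.remove)
    also have "(\<Sum>j\<in>UNIV - {i}. Lstar Q v $ i $ j) = (\<Sum>j\<in>UNIV - {i}. - (Q $ j $ i * v $ j / v $ i))"
      by (rule sum.cong) (auto simp: Lstar_def)
    finally show ?thesis by (simp add: Lstar_def sum_negf)
  qed
  have Mrow: "(\<Sum>j\<in>UNIV. M $ i $ j) = \<delta> $ i" for i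
    using Lrow[of i] by (simp add: M_def sum.distrib diagm_def)
  have Mo: "\<forall>i j. i \<noteq> j \<longrightarrow> M $ i $ j \<le> 0"
  proof (intro allI impI)
    fix i j :: 'n assume ij: "i \<noteq> j"
    have "Q $ j $ i \<ge> 0" using ij assms(2) unfolding generator_matrix_def by auto
    then have "Q $ j $ i * v $ j / v $ i \<ge> 0" using vpos
      by (simp add: less_imp_le)
    then show "M $ i $ j \<le> 0" using Moff[OF ij] by simp
  qed
  have Ninv: "invertible (M + diagm c)" if cnn: "\<forall>i. c $ i \<ge> 0" for c
  proof (rule zmat_invertible)
    show "\<forall>i j. i \<noteq> j \<longrightarrow> (M + diagm c) $ i $ j \<le> 0"
      using Mo by (auto simp: diagm_def)
    have rs: "(\<Sum>j\<in>UNIV. (M + diagm c) $ i $ j) = \<delta> $ i + c $ i" for i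
      using Mrow[of i] by (simp add: sum.distrib diagm_def)
    show "\<forall>i. (\<Sum>j\<in>UNIV. (M + diagm c) $ i $ j) \<ge> 0" using rs dnn cnn
      by (simp add: add_nonneg_nonneg)
    show "\<exists>i. (\<Sum>j\<in>UNIV. (M + diagm c) $ i $ j) > 0" using rs dnn cnn dpos
      by (metis add_pos_nonneg)
    have releq: "{(a, b). a \<noteq> b \<and> (M + diagm c) $ a $ b \<noteq> 0}
        = {(a, b). a \<noteq> b \<and> Q $ a $ b \<noteq> 0}\<inverse>"
      using Moff vpos by (auto simp: diagm_def) (metis less_irrefl)+
    show "\<forall>i j. (i, j) \<in> {(a, b). a \<noteq> b \<and> (M + diagm c) $ a $ b \<noteq> 0}\<^sup>*"
      unfolding releq using assms(3) unfolding irreducible_matrix_def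
      by (blast intro: rtrancl_converseI)
  qed
  have d0: "diagm (0::real^'n) = 0" by (simp add: diagm_def vec_eq_iff)
  have Minv: "invertible M" using Ninv[of 0] by (simp add: d0)
  have fixeq: "\<forall>i. (M *v p) $ i = \<beta> $ i * p $ i * (1 - p $ i)"
    if pp: "\<forall>i. p $ i > 0" and fx: "Hmap (Amat Q v \<beta> \<delta>) p = p" for p
  proof -
    define Mi where "Mi = matrix_inv M"
    have MMi: "M ** Mi = mat 1" "Mi ** M = mat 1" using minv[OF Minv] by (auto simp: Mi_def)
    define Np where "Np = M + diagm (\<beta> * p)"
    have Npinv: "invertible Np" unfolding Np_def
      by (rule Ninv) (use bpos pp in \<open>simp add: less_imp_le\<close>)
    have Miinv: "invertible Mi" using MMi unfolding invertible_def by blast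
    define C where "C = mat 1 + Amat Q v \<beta> \<delta> ** diagm p"
    have Ceq: "C = Mi ** Np"
      by (simp add: C_def Np_def Amat_def Mi_def[symmetric] matrix_add_ldistrib
          matrix_mul_assoc[symmetric] diagm_mm MMi M_def[symmetric])
    have Cinv: "invertible C" using Ceq invertible_mult[OF Miinv Npinv] by simp
    have "C *v p = C *v (matrix_inv C *v (Amat Q v \<beta> \<delta> *v p))"
      using fx by (simp add: Hmap_def C_def)
    also have "\<dots> = Amat Q v \<beta> \<delta> *v p"
      using minv[OF Cinv] by (simp add: matrix_vector_mul_assoc matrix_mul_assoc)
    finally have "Mi *v (Np *v p) = Mi *v (diagm \<beta> *v p)"
      by (simp add: Ceq Amat_def Mi_def[symmetric] M_def[symmetric] matrix_vector_mul_assoc)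
    hence "M *v (Mi *v (Np *v p)) = M *v (Mi *v (diagm \<beta> *v p))" by simp
    hence "Np *v p = diagm \<beta> *v p" by (simp add: matrix_vector_mul_assoc matrix_mul_assoc MMi)
    hence "M *v p + \<beta> * p * p = \<beta> * p"
      by (simp add: Np_def matrix_vector_mult_add_rdistrib diagm_mv)
    thus ?thesis by (auto simp: vec_eq_iff algebra_simps)
  qed
  show ?thesis
  proof (intro allI impI)
    fix p :: "real ^ 'n" assume h: "(\<forall>i. p $ i > 0) \<and> Hmap (Amat Q v \<beta> \<delta>) p = p"
    have e1: "\<forall>i. (M *v p) $ i = \<beta> $ i * p $ i * (1 - p $ i)" using fixeq h by blast
    have e2: "\<forall>i. (M *v pstar) $ i = \<beta> $ i * pstar $ i * (1 - pstar $ i)"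
      using fixeq assms(10,11) by blast
    show "p = pstar"
    proof -
      have hp: "\<forall>i. p $ i > 0" using h by simp
      have "p $ i = pstar $ i" for i
        using ratio_le[OF Mo bpos assms(10) hp e2 e1, of i] ratio_le[OF Mo bpos hp assms(10) e1 e2, of i]
        by simp
      then show ?thesis by (simp add: vec_eq_iff)
    qed
  qed
qed

end
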